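(* Fix an integer $p\ge 1$ and a real vector $\psi=(\psi_{w};\ 0<w\le \mathbf{1})$ indexed by the nonzero binary vectors $w\in\{0,1\}^p$, and for $v\in\{0,1\}^p$ let $\mathrm{OR}_{v}=\exp\big(\sum_{0<w\le v}\psi_w\big)$. Let $J\subset\{1,\dots,p\}$, $K=\{1,\dots,p\}\setminus J$, write $v=(v_J,v_K)$, and fix $v_K$. Define $\Delta^{(w,v_K)}\mathrm{OR}=\sum_{0\le u\le w}(-1)^{|w-u|}\mathrm{OR}_{(u,v_K)}$ for $w\in\{0,1\}^{|J|}$, and for $v_J\in\{0,1\}^{|J|}$ and $0\le i\le |v_J|$ define the prediction $$\mathrm{OR}_{(v_J,v_K),i}=\sum_{0\le w\le v_J,\ |w|\le i}\Delta^{(w,v_K)}\mathrm{OR}.$$ Then, if $0\le i<|v_J|$, $$\mathrm{OR}_{(v_J,v_K),i}=\sum_{0\le w\le v_J,\ |w|\le i}\mathrm{OR}_{(w,v_K)}\,(-1)^{i-|w|}\binom{|v_J|-1-|w|}{i-|w|},$$ and if $i=|v_J|$, then $\mathrm{OR}_{(v_J,v_K),i}=\mathrm{OR}_{(v_J,v_K)}$.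
   Context: Inequalities between binary vectors are componentwise; for a binary vector $w$, $|w|=\sum_j w_j$; $\mathbf 0$, $\mathbf 1$ are the all-zeros and all-ones vectors. Coordinates are ordered so that the factors in $J$ come first, $v=(v_J,v_K)$. Sums over $w$ range over binary vectors $w\in\{0,1\}^{|J|}$. *)

theory Defs
  imports Complex_Main
begin

text \<open>Binary vectors in {0,1}^p are identified with subsets of {1..p}
  (a vector is identified with its support). Then componentwise order is
  set inclusion, |w| is card w, the zero vector is the empty set, and the
  concatenation (v_J, v_K) with v_J supported in J and v_K in K is the
  disjoint union v_J \<union> v_K.\<close>

definition OR :: "(nat set \<Rightarrow> real) \<Rightarrow> nat set \<Rightarrow> real" where
  "OR \<psi> v = exp (\<Sum>w \<in> {w. w \<subseteq> v \<and> w \<noteq> {}}. \<psi> w)"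

definition DeltaOR :: "(nat set \<Rightarrow> real) \<Rightarrow> nat set \<Rightarrow> nat set \<Rightarrow> real" where
  "DeltaOR \<psi> w vK = (\<Sum>u \<in> Pow w. (-1) ^ (card w - card u) * OR \<psi> (u \<union> vK))"

definition ORpred :: "(nat set \<Rightarrow> real) \<Rightarrow> nat set \<Rightarrow> nat set \<Rightarrow> nat \<Rightarrow> real" where
  "ORpred \<psi> vJ vK i = (\<Sum>w \<in> {w. w \<subseteq> vJ \<and> card w \<le> i}. DeltaOR \<psi> w vK)"

end

theory Submission
  imports Defs
begin

lemma alt_sum:
  "(\<Sum>k\<le>j. (-1)^k * real (Suc N choose k)) = (-1)^j * real (N choose j)"
proof (induction j)
  case 0 then show ?case by simp
next
  case (Suc j)
  have "(\<Sum>k\<le>Suc j. (-1)^k * real (Suc N choose k))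
     = (-1)^j * real (N choose j) + (-1)^(Suc j) * real (Suc N choose Suc j)"
    using Suc by simp
  also have "\<dots> = (-1)^(Suc j) * real (N choose Suc j)"
    by (simp add: algebra_simps)
  finally show ?case .
qed

lemma alt_sum0:
  assumes "j \<le> N"
  shows "(\<Sum>k\<le>j. (-1)^k * real (N choose k)) = (if N = j then (if N = 0 then 1 else 0) else (-1)^j * real (N - 1 choose j))"
proof (cases N)
  case 0 then show ?thesis using assms by simp
next
  case (Suc M)
  show ?thesis
  proof (cases "N = j")
    case True
    have a: "(\<Sum>k\<le>j. (-1)^k * real (N choose k)) = (-1)^j * real (M choose j)"
      unfolding Suc by (rule alt_sum)
    have "(M choose j) = 0" using Suc True by simp
    then show ?thesis using a Suc True by simp
  next
    case False
    have a: "(\<Sum>k\<le>j. (-1)^k * real (N choose k)) = (-1)^j * real (M choose j)"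
      unfolding Suc by (rule alt_sum)
    then show ?thesis using Suc False by simp
  qed
qed

lemma count_sum:
  assumes "finite V" "u \<subseteq> V" "card u \<le> i"
  shows "(\<Sum>w\<in>{w. u \<subseteq> w \<and> w \<subseteq> V \<and> card w \<le> i}. (-1::real)^(card w - card u))
       = (\<Sum>k\<le>i - card u. (-1)^k * real (card (V - u) choose k))"
proof -
  let ?j = "i - card u"
  let ?S = "{S. S \<subseteq> V - u \<and> card S \<le> ?j}"
  have fu: "finite u" using assms finite_subset by blast
  have bij: "bij_betw (\<lambda>S. u \<union> S) ?S {w. u \<subseteq> w \<and> w \<subseteq> V \<and> card w \<le> i}"
  proof (rule bij_betw_byWitness[where f' = "\<lambda>w. w - u"])
    show "\<forall>S\<in>?S. (\<lambda>S. u \<union> S) S - u = S" by auto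
    show "\<forall>w\<in>{w. u \<subseteq> w \<and> w \<subseteq> V \<and> card w \<le> i}. u \<union> (w - u) = w" by auto
    show "(\<lambda>S. u \<union> S) ` ?S \<subseteq> {w. u \<subseteq> w \<and> w \<subseteq> V \<and> card w \<le> i}"
    proof
      fix w assume "w \<in> (\<lambda>S. u \<union> S) ` ?S"
      then obtain S where S: "S \<subseteq> V - u" "card S \<le> ?j" "w = u \<union> S" by auto
      have "finite S" using S assms finite_subset by blast
      moreover have "u \<inter> S = {}" using S by auto
      ultimately have "card w = card u + card S" using S fu by (simp add: card_Un_disjoint)
      then show "w \<in> {w. u \<subseteq> w \<and> w \<subseteq> V \<and> card w \<le> i}" using S assms by auto
    qed
    show "(\<lambda>w. w - u) ` {w. u \<subseteq> w \<and> w \<subseteq> V \<and> card w \<le> i} \<subseteq> ?S"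
    proof
      fix S assume "S \<in> (\<lambda>w. w - u) ` {w. u \<subseteq> w \<and> w \<subseteq> V \<and> card w \<le> i}"
      then obtain w where w: "u \<subseteq> w" "w \<subseteq> V" "card w \<le> i" "S = w - u" by auto
      have "finite w" using w assms finite_subset by blast
      then have "card S = card w - card u" using w by (simp add: card_Diff_subset fu)
      then show "S \<in> ?S" using w by auto
    qed
  qed
  have "(\<Sum>w\<in>{w. u \<subseteq> w \<and> w \<subseteq> V \<and> card w \<le> i}. (-1::real)^(card w - card u))
      = (\<Sum>S\<in>?S. (-1::real)^(card (u \<union> S) - card u))"
    using sum.reindex_bij_betw[OF bij, symmetric] by simp
  also have "\<dots> = (\<Sum>S\<in>?S. (-1::real)^(card S))"
  proof (rule sum.cong[OF refl])
    fix S assume "S \<in> ?S"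
    then have "S \<subseteq> V - u" by auto
    moreover then have "finite S" using assms finite_subset by blast
    moreover have "u \<inter> S = {}" using \<open>S \<subseteq> V - u\<close> by auto
    ultimately have "card (u \<union> S) = card u + card S" using fu by (simp add: card_Un_disjoint)
    then show "(-1::real)^(card (u \<union> S) - card u) = (-1)^(card S)" by simp
  qed
  also have "\<dots> = (\<Sum>k\<in>{..?j}. \<Sum>S\<in>{S \<in> ?S. card S = k}. (-1::real)^(card S))"
    by (rule sum.group[symmetric]) (auto intro: finite_subset[of _ "Pow V"] simp: assms)
  also have "\<dots> = (\<Sum>k\<le>?j. (-1)^k * real (card (V - u) choose k))"
  proof (rule sum.cong[OF refl])
    fix k assume k: "k \<in> {..?j}"
    have eq: "{S \<in> ?S. card S = k} = {S. S \<subseteq> V - u \<and> card S = k}" using k by auto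
    show "(\<Sum>S\<in>{S \<in> ?S. card S = k}. (-1::real)^(card S)) = (-1)^k * real (card (V - u) choose k)"
      unfolding eq using n_subsets[of "V - u" k] assms by simp
  qed
  finally show ?thesis .
qed

lemma main_gen:
  fixes f :: "nat set \<Rightarrow> real"
  assumes V: "finite V"
  shows "(\<Sum>w\<in>{w. w \<subseteq> V \<and> card w \<le> i}. \<Sum>u\<in>Pow w. (-1)^(card w - card u) * f u)
       = (\<Sum>u\<in>{u. u \<subseteq> V \<and> card u \<le> i}. f u * (\<Sum>k\<le>i - card u. (-1)^k * real (card V - card u choose k)))"
proof -
  let ?A = "{w. w \<subseteq> V \<and> card w \<le> i}"
  have fA: "finite ?A" using V by (auto intro: finite_subset[of _ "Pow V"])
  have "(\<Sum>w\<in>?A. \<Sum>u\<in>Pow w. (-1)^(card w - card u) * f u)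
      = (\<Sum>w\<in>?A. \<Sum>u\<in>{u. u \<in> Pow V \<and> u \<subseteq> w}. (-1)^(card w - card u) * f u)"
    by (rule sum.cong[OF refl], rule sum.cong) auto
  also have "\<dots> = (\<Sum>u\<in>Pow V. \<Sum>w\<in>{w. w \<in> ?A \<and> u \<subseteq> w}. (-1)^(card w - card u) * f u)"
    by (rule sum.swap_restrict[OF fA]) (simp add: V)
  also have "\<dots> = (\<Sum>u\<in>?A. \<Sum>w\<in>{w. w \<in> ?A \<and> u \<subseteq> w}. (-1)^(card w - card u) * f u)"
  proof -
    have zero: "\<forall>u\<in>Pow V - ?A. (\<Sum>w\<in>{w. w \<in> ?A \<and> u \<subseteq> w}. (-1::real)^(card w - card u) * f u) = 0"
    proof
      fix u assume u: "u \<in> Pow V - ?A"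
      have "{w. w \<in> ?A \<and> u \<subseteq> w} = {}"
      proof (rule ccontr)
        assume "{w. w \<in> ?A \<and> u \<subseteq> w} \<noteq> {}"
        then obtain w where "w \<subseteq> V" "card w \<le> i" "u \<subseteq> w" by auto
        moreover then have "card u \<le> card w" using V by (meson card_mono finite_subset)
        ultimately show False using u by auto
      qed
      then show "(\<Sum>w\<in>{w. w \<in> ?A \<and> u \<subseteq> w}. (-1::real)^(card w - card u) * f u) = 0" by (metis sum.empty)
    qed
    show ?thesis by (rule sum.mono_neutral_right) (use V zero in auto)
  qed
  also have "\<dots> = (\<Sum>u\<in>?A. f u * (\<Sum>k\<le>i - card u. (-1)^k * real (card V - card u choose k)))"
  proof (rule sum.cong[OF refl])
    fix u assume u: "u \<in> ?A"
    have eq: "{w. w \<in> ?A \<and> u \<subseteq> w} = {w. u \<subseteq> w \<and> w \<subseteq> V \<and> card w \<le> i}" by auto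
    have cV: "card (V - u) = card V - card u" using u V card_Diff_subset[of u V] finite_subset[of u V] by simp
    have c: "(\<Sum>w\<in>{w. u \<subseteq> w \<and> w \<subseteq> V \<and> card w \<le> i}. (-1::real)^(card w - card u))
       = (\<Sum>k\<le>i - card u. (-1)^k * real (card V - card u choose k))"
      using count_sum[of V u i] u V cV by simp
    show "(\<Sum>w\<in>{w. w \<in> ?A \<and> u \<subseteq> w}. (-1)^(card w - card u) * f u)
        = f u * (\<Sum>k\<le>i - card u. (-1)^k * real (card V - card u choose k))"
      unfolding eq sum_distrib_right[symmetric] c by (rule mult.commute)
  qed
  finally show ?thesis .
qed

theorem proposition1:
  fixes p :: nat and \<psi> :: "nat set \<Rightarrow> real" and J K vJ vK :: "nat set" and i :: nat
  assumes "p \<ge> 1"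
    and "J \<subseteq> {1..p}" and "K = {1..p} - J"
    and "vJ \<subseteq> J" and "vK \<subseteq> K"
    and "i \<le> card vJ"
  shows "(i < card vJ \<longrightarrow>
            ORpred \<psi> vJ vK i =
              (\<Sum>w \<in> {w. w \<subseteq> vJ \<and> card w \<le> i}.
                 OR \<psi> (w \<union> vK) * (-1) ^ (i - card w)
                 * real ((card vJ - 1 - card w) choose (i - card w))))
       \<and> (i = card vJ \<longrightarrow> ORpred \<psi> vJ vK i = OR \<psi> (vJ \<union> vK))"
proof -
  have V: "finite vJ" using assms(2,4) finite_subset by (metis finite_atLeastAtMost)
  let ?f = "\<lambda>u. OR \<psi> (u \<union> vK)"
  have base: "ORpred \<psi> vJ vK i = (\<Sum>u\<in>{u. u \<subseteq> vJ \<and> card u \<le> i}.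
      ?f u * (\<Sum>k\<le>i - card u. (-1)^k * real (card vJ - card u choose k)))"
    unfolding ORpred_def DeltaOR_def using main_gen[OF V, where i=i and f="?f"] by simp
  have c_le: "card u \<le> card vJ" if "u \<subseteq> vJ" for u using V that card_mono by blast
  show ?thesis
  proof (intro conjI impI)
    assume lt: "i < card vJ"
    show "ORpred \<psi> vJ vK i =
              (\<Sum>w \<in> {w. w \<subseteq> vJ \<and> card w \<le> i}.
                 OR \<psi> (w \<union> vK) * (-1) ^ (i - card w)
                 * real ((card vJ - 1 - card w) choose (i - card w)))"
      unfolding base
    proof (rule sum.cong[OF refl])
      fix u assume u: "u \<in> {w. w \<subseteq> vJ \<and> card w \<le> i}"
      have "(\<Sum>k\<le>i - card u. (-1)^k * real (card vJ - card u choose k))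
          = (-1) ^ (i - card u) * real ((card vJ - 1 - card u) choose (i - card u))"
        using alt_sum0[of "i - card u" "card vJ - card u"] u lt by (simp add: diff_commute)
      then show "?f u * (\<Sum>k\<le>i - card u. (-1)^k * real (card vJ - card u choose k))
          = ?f u * (-1) ^ (i - card u) * real ((card vJ - 1 - card u) choose (i - card u))"
        by simp
    qed
  next
    assume eqi: "i = card vJ"
    have "ORpred \<psi> vJ vK i = (\<Sum>u\<in>{u. u \<subseteq> vJ \<and> card u \<le> i}. if u = vJ then ?f u else 0)"
      unfolding base
    proof (rule sum.cong[OF refl])
      fix u assume u: "u \<in> {w. w \<subseteq> vJ \<and> card w \<le> i}"
      have iff: "card vJ - card u = 0 \<longleftrightarrow> u = vJ"
        using u c_le[of u] V by (metis card_subset_eq diff_is_0_eq le_antisym mem_Collect_eq)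
      show "?f u * (\<Sum>k\<le>i - card u. (-1)^k * real (card vJ - card u choose k)) = (if u = vJ then ?f u else 0)"
        using alt_sum0[of "i - card u" "card vJ - card u"] iff eqi by auto
    qed
    also have "\<dots> = ?f vJ" using eqi by (simp add: sum.delta[OF finite_subset[of _ "Pow vJ"]] V) 
    finally show "ORpred \<psi> vJ vK i = OR \<psi> (vJ \<union> vK)" .
  qed
qed

end
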